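(* Let $n\ge 1$ and, for $i=1,\dots,n$, let $f_i:\mathbb{R}^{d_i}\to\mathbb{R}$, $A_i\in\mathbb{R}^{p\times d_i}$, and let $b\in\mathbb{R}^p$. Set $d=\sum_i d_i$, $\mathbf{x}=[x_1^\top,\dots,x_n^\top]^\top\in\mathbb{R}^d$, $f(\mathbf{x})=\sum_{i=1}^n f_i(x_i)$, $A=[A_1,\dots,A_n]\in\mathbb{R}^{p\times d}$. Consider the problem $\min_{\mathbf{x}\in\mathbb{R}^d} f(\mathbf{x})$ subject to $A\mathbf{x}=b$ (i.e. all local constraint sets are $\mathcal{X}_i=\mathbb{R}^{d_i}$), assumed to have at least one optimal solution. Suppose each $f_i$ is convex and differentiable on $\mathbb{R}^{d_i}$ with locally Lipschitz gradient $\nabla f_i$, and that there exists $\mathbf{x}$ with $A\mathbf{x}=b$. Fix $\alpha>0$ and consider the augmented primal-dual gradient dynamics (APGD) $$\dot{\mathbf{x}}=-\alpha\big(\nabla f(\mathbf{x})+A^\top\lambda\big)-A^\top(A\mathbf{x}-b),\qquad \dot\lambda=A\mathbf{x}-b,$$ where $\nabla f(\mathbf{x})=[\nabla f_1(x_1)^\top,\dots,\nabla f_n(x_n)^\top]^\top$. Then for every initial point $(\mathbf{x}(0),\lambda(0))\in\mathbb{R}^d\times\mathbb{R}^p$, the trajectory $(\mathbf{x}(t),\lambda(t))$ converges to a saddle point of the augmented Lagrangian $\mathcal{L}_\alpha(\mathbf{x},\lambda)=f(\mathbf{x})+\lambda^\top(A\mathbf{x}-b)+\frac{1}{2\alpha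}\|A\mathbf{x}-b\|^2$.
   Context: A saddle point of $\mathcal{L}_\alpha$ is a pair $(\mathbf{x}^*,\lambda^* )\in\mathbb{R}^d\times\mathbb{R}^p$ with $\mathcal{L}_\alpha(\mathbf{x}^*,\lambda)\le\mathcal{L}_\alpha(\mathbf{x}^*,\lambda^* )\le\mathcal{L}_\alpha(\mathbf{x},\lambda^* )$ for all $\mathbf{x}\in\mathbb{R}^d$, $\lambda\in\mathbb{R}^p$. No structural assumption on $A$ (such as full row rank) is made. *)

theory Defs
  imports "HOL-Analysis.Analysis"
begin

definition locally_lipschitz :: "('a::metric_space \<Rightarrow> 'b::metric_space) \<Rightarrow> bool" where
  "locally_lipschitz g \<longleftrightarrow> (\<forall>z. \<exists>U L. open U \<and> z \<in> U \<and> L-lipschitz_on U g)"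

definition aug_lagrangian ::
  "real \<Rightarrow> (real^'d \<Rightarrow> real) \<Rightarrow> real^'d^'p \<Rightarrow> real^'p \<Rightarrow> real^'d \<Rightarrow> real^'p \<Rightarrow> real" where
  "aug_lagrangian \<alpha> f A b x lam =
     f x + lam \<bullet> (A *v x - b) + (1 / (2 * \<alpha>)) * (norm (A *v x - b))\<^sup>2"

definition is_saddle_point ::
  "real \<Rightarrow> (real^'d \<Rightarrow> real) \<Rightarrow> real^'d^'p \<Rightarrow> real^'p \<Rightarrow> real^'d \<Rightarrow> real^'p \<Rightarrow> bool" where
  "is_saddle_point \<alpha> f A b xs ls \<longleftrightarrow>
     (\<forall>lam. aug_lagrangian \<alpha> f A b xs lam \<le> aug_lagrangian \<alpha> f A b xs ls) \<and>
     (\<forall>x. aug_lagrangian \<alpha> f A b xs ls \<le> aug_lagrangian \<alpha> f A b x ls)"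

end

theory Submission
  imports Defs
begin


lemma grad_ineq:
  fixes F :: "'a::real_inner \<Rightarrow> real"
  assumes cvx: "convex_on UNIV F"
    and der: "\<And>u. (F has_derivative (\<lambda>h. h \<bullet> DF u)) (at u)"
  shows "F v \<ge> F u + DF u \<bullet> (v - u)"
proof -
  define \<phi> where "\<phi> t = F (u + t *\<^sub>R (v - u))" for t :: real
  have c: "convex_on UNIV \<phi>"
  proof (rule convex_onI)
    fix t p q :: real assume t: "0 < t" "t < 1"
    have "u + ((1 - t) * p + t * q) *\<^sub>R (v - u) = (1 - t) *\<^sub>R (u + p *\<^sub>R (v - u)) + t *\<^sub>R (u + q *\<^sub>R (v - u))"
      by (simp add: algebra_simps)
    then show "\<phi> ((1 - t) *\<^sub>R p + t *\<^sub>R q) \<le> (1 - t) * \<phi> p + t * \<phi> q"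
      unfolding \<phi>_def using convex_onD[OF cvx, of t] t by simp
  qed simp
  have d: "(\<phi> has_field_derivative (DF u \<bullet> (v - u))) (at 0)"
  proof -
    have "((\<lambda>t. u + t *\<^sub>R (v - u)) has_derivative (\<lambda>h. h *\<^sub>R (v - u))) (at 0)"
      by (auto intro!: derivative_eq_intros)
    moreover have "(F has_derivative (\<lambda>h. h \<bullet> DF u)) (at ((\<lambda>t. u + t *\<^sub>R (v - u)) 0))"
      using der by simp
    ultimately have "((F \<circ> (\<lambda>t. u + t *\<^sub>R (v - u))) has_derivative ((\<lambda>h. h \<bullet> DF u) \<circ> (\<lambda>h. h *\<^sub>R (v - u)))) (at 0)"
      by (rule diff_chain_at)
    then have "(\<phi> has_derivative (\<lambda>h. (h *\<^sub>R (v - u)) \<bullet> DF u)) (at 0)"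
      unfolding \<phi>_def o_def by simp
    moreover have "(\<lambda>h. (h *\<^sub>R (v - u)) \<bullet> DF u) = (*) (DF u \<bullet> (v - u))"
      by (auto simp: inner_commute)
    ultimately show ?thesis unfolding has_field_derivative_def by simp
  qed
  have "\<phi> 1 - \<phi> 0 \<ge> (DF u \<bullet> (v - u)) * (1 - 0)"
    by (rule convex_on_imp_above_tangent[OF c]) (use d in auto)
  then show ?thesis unfolding \<phi>_def by simp
qed

lemma grad_mono:
  fixes F :: "'a::real_inner \<Rightarrow> real"
  assumes cvx: "convex_on UNIV F"
    and der: "\<And>u. (F has_derivative (\<lambda>h. h \<bullet> DF u)) (at u)"
  shows "(u - v) \<bullet> (DF u - DF v) \<ge> 0"
  using grad_ineq[OF cvx der, of u v] grad_ineq[OF cvx der, of v u]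
  by (simp add: inner_diff_left inner_diff_right inner_commute)

lemma grad_eq:
  fixes F :: "'a::real_inner \<Rightarrow> real"
  assumes cvx: "convex_on UNIV F"
    and der: "\<And>u. (F has_derivative (\<lambda>h. h \<bullet> DF u)) (at u)"
    and z: "(u - v) \<bullet> (DF u - DF v) = 0"
  shows "DF u = DF v"
proof -
  define h where "h w = F w - F v - DF v \<bullet> (w - v)" for w
  have hge: "\<forall>w\<in>UNIV. h u \<le> h w"
  proof
    fix w
    have "h u = 0"
      using grad_ineq[OF cvx der, of u v] grad_ineq[OF cvx der, of v u] z
      unfolding h_def by (simp add: inner_diff_left inner_diff_right inner_commute)
    moreover have "h w \<ge> 0" using grad_ineq[OF cvx der, of v w] unfolding h_def by simp
    ultimately show "h u \<le> h w" by simp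
  qed
  have "(h has_derivative (\<lambda>k. k \<bullet> DF u - DF v \<bullet> k)) (at u)"
    unfolding h_def by (auto intro!: derivative_eq_intros der)
  from differential_zero_maxmin[OF _ _ this] hge
  have "(\<lambda>k. k \<bullet> DF u - DF v \<bullet> k) = (\<lambda>k. 0)" by auto
  then have "(DF u - DF v) \<bullet> DF u - DF v \<bullet> (DF u - DF v) = 0" by metis
  then have "(DF u - DF v) \<bullet> (DF u - DF v) = 0" by (simp add: inner_diff_left inner_diff_right inner_commute)
  then show ?thesis by simp
qed

lemma inner_vmul [simp]: "(u::real^'d) \<bullet> (w v* A) = (A *v u) \<bullet> (w::real^'p)"
  by (metis (no_types) dot_lmul_matrix[of w A u] inner_commute[of u "w v* A"] inner_commute[of w "A *v u"])

lemma inner_transpose: "(u::real^'d) \<bullet> (transpose A *v w) = (A *v u) \<bullet> (w::real^'p)"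
  by simp

lemma mv_minus: "(A::real^'d^'p) *v (- x) = - (A *v x)"
  using matrix_vector_mult_diff_distrib[of A 0 x] by simp

lemma kkt_exists:
  fixes F :: "real^'d \<Rightarrow> real" and A :: "real^'d^'p"
  assumes der: "\<And>u. (F has_derivative (\<lambda>h. h \<bullet> DF u)) (at u)"
    and feas: "A *v xs = b" and opt: "\<forall>v. A *v v = b \<longrightarrow> F xs \<le> F v"
  shows "\<exists>ls. DF xs + transpose A *v ls = 0"
proof -
  have orth: "DF xs \<bullet> v = 0" if v: "A *v v = 0" for v
  proof -
    define \<phi> where "\<phi> t = F (xs + t *\<^sub>R v)" for t :: real
    have d1: "((\<lambda>t. xs + t *\<^sub>R v) has_derivative (\<lambda>h. h *\<^sub>R v)) (at 0)"
      by (auto intro!: derivative_eq_intros)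
    have d2: "(F has_derivative (\<lambda>h. h \<bullet> DF xs)) (at ((\<lambda>t. xs + t *\<^sub>R v) 0))"
      using der by simp
    have "((F \<circ> (\<lambda>t. xs + t *\<^sub>R v)) has_derivative ((\<lambda>h. h \<bullet> DF xs) \<circ> (\<lambda>h. h *\<^sub>R v))) (at 0)"
      using d1 d2 by (rule diff_chain_at)
    then have d: "(\<phi> has_derivative (\<lambda>h. (h *\<^sub>R v) \<bullet> DF xs)) (at 0)"
      unfolding \<phi>_def o_def by simp
    have "\<forall>y\<in>UNIV. \<phi> 0 \<le> \<phi> y"
      unfolding \<phi>_def using opt feas v by (simp add: matrix_vector_right_distrib matrix_vector_mult_scaleR)
    from differential_zero_maxmin[OF _ _ d] this
    have "(\<lambda>h. (h *\<^sub>R v) \<bullet> DF xs) = (\<lambda>h. 0)" by auto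
    then have "((1::real) *\<^sub>R v) \<bullet> DF xs = 0" by metis
    then show ?thesis by (simp add: inner_commute)
  qed
  define S where "S = range (\<lambda>\<mu>. transpose A *v \<mu>)"
  have "subspace S" unfolding S_def
    by (intro linear_subspace_image subspace_UNIV) (simp add: matrix_vector_mul_linear)
  then have spanS: "span S = S" by (simp add: span_eq_iff)
  obtain y r where y: "y \<in> span S" and r: "\<And>w. w \<in> span S \<Longrightarrow> orthogonal r w"
    and dec: "DF xs = y + r"
    using orthogonal_subspace_decomp_exists[of S "DF xs"] by metis
  have "y \<in> S" using y spanS by simp
  then obtain \<mu> where \<mu>: "y = transpose A *v \<mu>" unfolding S_def by (rule rangeE)
  have "transpose A *v (A *v r) \<in> S" unfolding S_def by (rule rangeI)
  then have "transpose A *v (A *v r) \<in> span S" by (rule span_base)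
  then have "orthogonal r (transpose A *v (A *v r))" by (rule r)
  then have "(A *v r) \<bullet> (A *v r) = 0" unfolding orthogonal_def inner_transpose .
  then have Ar: "A *v r = 0" by simp
  have "r \<bullet> y = 0" using r[OF y] unfolding orthogonal_def .
  moreover have "(y + r) \<bullet> r = 0" using orth[OF Ar] dec by simp
  moreover have "(y + r) \<bullet> r = y \<bullet> r + r \<bullet> r" by (rule inner_add_left)
  moreover have "y \<bullet> r = r \<bullet> y" by (rule inner_commute)
  ultimately have "r \<bullet> r = 0" by linarith
  then have "r = 0" by simp
  then have "DF xs + transpose A *v (- \<mu>) = 0" using dec \<mu>
    by (simp add: mv_minus)
  then show ?thesis by blast
qed

lemma kkt_saddle:
  fixes F :: "real^'d \<Rightarrow> real" and A :: "real^'d^'p"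
  assumes cvx: "convex_on UNIV F"
    and der: "\<And>u. (F has_derivative (\<lambda>h. h \<bullet> DF u)) (at u)"
    and al: "\<alpha> > 0"
    and feas: "A *v xs = b" and kkt: "DF xs + transpose A *v ls = 0"
  shows "is_saddle_point \<alpha> F A b xs ls"
  unfolding is_saddle_point_def
proof (intro conjI allI)
  fix l show "aug_lagrangian \<alpha> F A b xs l \<le> aug_lagrangian \<alpha> F A b xs ls"
    by (simp add: aug_lagrangian_def feas)
next
  fix u
  have "F u \<ge> F xs + DF xs \<bullet> (u - xs)" by (rule grad_ineq[OF cvx der])
  moreover have "DF xs \<bullet> (u - xs) = - (ls \<bullet> (A *v u - b))"
  proof -
    have "DF xs = - (transpose A *v ls)" using kkt by (simp add: eq_neg_iff_add_eq_0)
    then have "DF xs \<bullet> (u - xs) = - ((u - xs) \<bullet> (transpose A *v ls))" by (metis inner_commute inner_minus_left)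
    also have "\<dots> = - ((A *v (u - xs)) \<bullet> ls)" by (simp only: inner_transpose)
    also have "\<dots> = - (ls \<bullet> (A *v u - b))" using feas by (metis inner_commute matrix_vector_mult_diff_distrib)
    finally show ?thesis .
  qed
  moreover have "0 \<le> (1 / (2 * \<alpha>)) * (norm (A *v u - b))\<^sup>2" using al by (intro mult_nonneg_nonneg) auto
  moreover have "aug_lagrangian \<alpha> F A b xs ls = F xs" unfolding aug_lagrangian_def feas by simp
  moreover have "aug_lagrangian \<alpha> F A b u ls = F u + ls \<bullet> (A *v u - b) + (1 / (2 * \<alpha>)) * (norm (A *v u - b))\<^sup>2"
    by (simp only: aug_lagrangian_def)
  ultimately show "aug_lagrangian \<alpha> F A b xs ls \<le> aug_lagrangian \<alpha> F A b u ls"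
    by linarith
qed




lemma nonincr:
  fixes W W' :: "real \<Rightarrow> real"
  assumes der: "\<And>t. t \<ge> 0 \<Longrightarrow> (W has_real_derivative W' t) (at t within {0..})"
    and neg: "\<And>t. t \<ge> 0 \<Longrightarrow> W' t \<le> 0" and st: "0 \<le> s" "s \<le> t"
  shows "W t \<le> W s"
proof (cases "s = t")
  case False
  then have lt: "s < t" using st by simp
  have "\<exists>x\<in>{s<..<t}. W t - W s = (*) (W' x) (t - s)"
  proof (rule mvt_simple[OF lt])
    fix x assume x: "s \<le> x" "x \<le> t"
    have "(W has_real_derivative W' x) (at x within {s..t})"
      by (rule DERIV_subset[OF der]) (use x st in auto)
    then show "(W has_derivative (*) (W' x)) (at x within {s..t})"
      by (simp add: has_field_derivative_def)
  qed
  then obtain x where x: "x \<in> {s<..<t}" "W t - W s = W' x * (t - s)" by auto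
  have "W' x * (t - s) \<le> 0" using neg[of x] x(1) st lt by (intro mult_nonpos_nonneg) auto
  then show ?thesis using x by simp
qed simp

lemma lipschitz_traj:
  fixes z :: "real \<Rightarrow> 'a::real_normed_vector"
  assumes der: "\<And>t. t \<ge> 0 \<Longrightarrow> (z has_vector_derivative z' t) (at t within {0..})"
    and bnd: "\<And>t. t \<ge> 0 \<Longrightarrow> norm (z' t) \<le> B"
    and st: "s \<ge> 0" "t \<ge> 0"
  shows "dist (z s) (z t) \<le> B * \<bar>s - t\<bar>"
proof -
  have "norm (z s - z t) \<le> B * norm (s - t)"
  proof (rule differentiable_bound[where S = "{0..}" and f' = "\<lambda>t h. h *\<^sub>R z' t"])
    show "convex {0::real..}" by (rule convex_real_interval)
    fix x :: real assume "x \<in> {0..}"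
    then show "(z has_derivative (\<lambda>h. h *\<^sub>R z' x)) (at x within {0..})"
      using der[of x] by (simp add: has_vector_derivative_def)
    have "onorm (\<lambda>h::real. h *\<^sub>R z' x) = onorm (\<lambda>h::real. h) * norm (z' x)"
      by (rule onorm_scaleR_left) (rule bounded_linear_ident)
    then show "onorm (\<lambda>h::real. h *\<^sub>R z' x) \<le> B" using bnd[of x] \<open>x \<in> {0..}\<close> by (simp add: onorm_id)
  qed (use st in auto)
  then show ?thesis by (simp add: dist_norm)
qed

lemma uc_comp:
  fixes z :: "real \<Rightarrow> 'a::metric_space" and H :: "'a \<Rightarrow> 'b::metric_space"
  assumes K: "compact K" and H: "continuous_on K H" and zK: "\<And>t. t \<ge> 0 \<Longrightarrow> z t \<in> K"
    and lip: "\<And>s t. s \<ge> 0 \<Longrightarrow> t \<ge> 0 \<Longrightarrow> dist (z s) (z t) \<le> M * \<bar>s - t\<bar>"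
  shows "\<forall>e>0. \<exists>d>0. \<forall>s\<ge>0. \<forall>t\<ge>0. \<bar>s - t\<bar> < d \<longrightarrow> dist (H (z s)) (H (z t)) < e"
proof (intro allI impI)
  fix e :: real assume e: "e > 0"
  have "uniformly_continuous_on K H" by (rule compact_uniformly_continuous[OF H K])
  then obtain d1 where d1: "d1 > 0" "\<And>x x'. x \<in> K \<Longrightarrow> x' \<in> K \<Longrightarrow> dist x' x < d1 \<Longrightarrow> dist (H x') (H x) < e"
    unfolding uniformly_continuous_on_def using e by metis
  define d where "d = d1 / (\<bar>M\<bar> + 1)"
  have d: "d > 0" unfolding d_def using d1 by simp
  show "\<exists>d>0. \<forall>s\<ge>0. \<forall>t\<ge>0. \<bar>s - t\<bar> < d \<longrightarrow> dist (H (z s)) (H (z t)) < e"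
  proof (intro exI conjI allI impI)
    fix s t :: real assume st: "s \<ge> 0" "t \<ge> 0" "\<bar>s - t\<bar> < d"
    have "dist (z s) (z t) \<le> M * \<bar>s - t\<bar>" by (rule lip[OF st(1,2)])
    also have "\<dots> \<le> (\<bar>M\<bar> + 1) * \<bar>s - t\<bar>" by (intro mult_right_mono) auto
    also have "\<dots> < (\<bar>M\<bar> + 1) * d" using st(3) by (intro mult_strict_left_mono) auto
    also have "\<dots> = d1" unfolding d_def by simp
    finally show "dist (H (z s)) (H (z t)) < e" using d1(2)[OF zK[OF st(2)] zK[OF st(1)]] by simp
  qed (rule d)
qed

lemma barbalat:
  fixes \<psi> \<psi>' :: "real \<Rightarrow> 'a::real_inner"
  assumes der: "\<And>t. t \<ge> 0 \<Longrightarrow> (\<psi> has_vector_derivative \<psi>' t) (at t within {0..})"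
    and lim: "(\<psi> \<longlongrightarrow> L) at_top"
    and uc: "\<forall>e>0. \<exists>d>0. \<forall>s\<ge>0. \<forall>t\<ge>0. \<bar>s - t\<bar> < d \<longrightarrow> dist (\<psi>' s) (\<psi>' t) < e"
  shows "(\<psi>' \<longlongrightarrow> 0) at_top"
proof (rule tendstoI)
  fix e :: real assume e: "e > 0"
  obtain d where d: "d > 0" "\<And>s t. s \<ge> 0 \<Longrightarrow> t \<ge> 0 \<Longrightarrow> \<bar>s - t\<bar> < d \<Longrightarrow> dist (\<psi>' s) (\<psi>' t) < e / 2"
    using uc e by (metis half_gt_zero)
  define h where "h = d / 2"
  have h: "h > 0" "h < d" unfolding h_def using d by auto
  have "eventually (\<lambda>t. dist (\<psi> t) L < e * h / 4) at_top"
    using lim h e by (intro tendstoD) auto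
  then obtain T where T: "\<And>t. t \<ge> T \<Longrightarrow> dist (\<psi> t) L < e * h / 4"
    by (auto simp: eventually_at_top_linorder)
  show "eventually (\<lambda>t. dist (\<psi>' t) 0 < e) at_top"
    unfolding eventually_at_top_linorder
  proof (intro exI allI impI)
    fix t assume tT: "t \<ge> max T 0"
    show "dist (\<psi>' t) 0 < e"
    proof (rule ccontr)
      assume "\<not> dist (\<psi>' t) 0 < e"
      then have big: "norm (\<psi>' t) \<ge> e" by simp
      define u where "u = \<psi>' t /\<^sub>R norm (\<psi>' t)"
      have np: "norm (\<psi>' t) \<noteq> 0" using big e by linarith
      have nu: "norm u = 1" unfolding u_def using np by simp
      define \<phi> where "\<phi> s = u \<bullet> \<psi> s" for s
      have "\<exists>x\<in>{t<..<t+h}. \<phi> (t + h) - \<phi> t = (\<lambda>k. k * (u \<bullet> \<psi>' x)) (t + h - t)"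
      proof (rule mvt_simple)
        show "t < t + h" using h by simp
        fix x assume x: "t \<le> x" "x \<le> t + h"
        have "(\<psi> has_derivative (\<lambda>k. k *\<^sub>R \<psi>' x)) (at x within {0..})"
          using der[of x] x tT by (simp add: has_vector_derivative_def)
        then have "(\<psi> has_derivative (\<lambda>k. k *\<^sub>R \<psi>' x)) (at x within {t..t+h})"
          by (rule has_derivative_subset) (use tT in auto)
        then have "((\<lambda>s. u \<bullet> \<psi> s) has_derivative (\<lambda>k. u \<bullet> (k *\<^sub>R \<psi>' x))) (at x within {t..t+h})"
          by (intro derivative_eq_intros) auto
        then show "(\<phi> has_derivative (\<lambda>k. k * (u \<bullet> \<psi>' x))) (at x within {t..t+h})"
          unfolding \<phi>_def by (simp add: algebra_simps)
      qed
      then obtain x where x: "x \<in> {t<..<t+h}" "\<phi> (t + h) - \<phi> t = h * (u \<bullet> \<psi>' x)" by auto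
      have "dist (\<psi>' x) (\<psi>' t) < e / 2" using x(1) tT h by (intro d(2)) auto
      then have close: "norm (\<psi>' x - \<psi>' t) < e / 2" by (simp add: dist_norm)
      have "u \<bullet> \<psi>' t = norm (\<psi>' t)" unfolding u_def using np
        by (simp add: power2_norm_eq_inner[symmetric] power2_eq_square)
      moreover have "\<bar>u \<bullet> (\<psi>' x - \<psi>' t)\<bar> \<le> norm (\<psi>' x - \<psi>' t)"
        using Cauchy_Schwarz_ineq2[of u "\<psi>' x - \<psi>' t"] nu by simp
      moreover have "u \<bullet> \<psi>' x = u \<bullet> \<psi>' t + u \<bullet> (\<psi>' x - \<psi>' t)" by (simp add: inner_diff_right)
      ultimately have ge: "u \<bullet> \<psi>' x \<ge> e / 2" using big close by linarith
      have "h * (e / 2) \<le> h * (u \<bullet> \<psi>' x)" using ge h by (intro mult_left_mono) auto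
      then have low: "\<phi> (t + h) - \<phi> t \<ge> h * e / 2" using x(2) by simp
      have "\<phi> (t + h) - \<phi> t = u \<bullet> (\<psi> (t + h) - \<psi> t)" unfolding \<phi>_def by (simp add: inner_diff_right)
      also have "\<dots> \<le> norm (\<psi> (t + h) - \<psi> t)"
        using Cauchy_Schwarz_ineq2[of u "\<psi> (t + h) - \<psi> t"] nu by simp
      also have "\<dots> \<le> dist (\<psi> (t + h)) L + dist (\<psi> t) L"
        by (metis dist_norm dist_triangle2)
      also have "\<dots> < e * h / 4 + e * h / 4" using T[of t] T[of "t + h"] tT h by (intro add_strict_mono) auto
      finally show False using low by (simp add: mult.commute)
    qed
  qed
qed




locale apgd =
  fixes F :: "real^'d::finite \<Rightarrow> real" and DF :: "real^'d \<Rightarrow> real^'d"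
    and A :: "real^'d^'p::finite" and b :: "real^'p" and \<alpha> :: real
    and x :: "real \<Rightarrow> real^'d" and lam :: "real \<Rightarrow> real^'p"
  assumes cvx: "convex_on UNIV F"
    and der: "\<And>u. (F has_derivative (\<lambda>h. h \<bullet> DF u)) (at u)"
    and contDF: "continuous_on UNIV DF"
    and al: "\<alpha> > 0"
    and ode_x: "\<And>t. t \<ge> 0 \<Longrightarrow> (x has_vector_derivative
        (- \<alpha> *\<^sub>R (DF (x t) + transpose A *v lam t) - transpose A *v (A *v x t - b))) (at t within {0..})"
    and ode_lam: "\<And>t. t \<ge> 0 \<Longrightarrow> (lam has_vector_derivative (A *v x t - b)) (at t within {0..})"
begin

definition Fx :: "real^'d \<Rightarrow> real^'p \<Rightarrow> real^'d" where
  "Fx u l = - \<alpha> *\<^sub>R (DF u + transpose A *v l) - transpose A *v (A *v u - b)"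

definition Wf :: "real^'d \<Rightarrow> real^'p \<Rightarrow> (real^'d) \<times> (real^'p) \<Rightarrow> real" where
  "Wf p q z = (fst z - p) \<bullet> (fst z - p) + \<alpha> * ((snd z - q) \<bullet> (snd z - q))"

definition Df :: "real^'d \<Rightarrow> real^'p \<Rightarrow> (real^'d) \<times> (real^'p) \<Rightarrow> real" where
  "Df p q z = 2 * ((fst z - p) \<bullet> Fx (fst z) (snd z)) + 2 * \<alpha> * ((snd z - q) \<bullet> (A *v fst z - b))"

lemma Df_eq:
  assumes feas: "A *v p = b" and kkt: "DF p + transpose A *v q = 0"
  shows "Df p q (u, l) = - 2 * \<alpha> * ((u - p) \<bullet> (DF u - DF p)) - 2 * ((A *v u - b) \<bullet> (A *v u - b))"
proof -
  have w: "A *v (u - p) = A *v u - b" using feas by (simp add: matrix_vector_mult_diff_distrib)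
  have h1: "(u - p) \<bullet> (transpose A *v l) = (A *v u - b) \<bullet> l"
    by (simp only: inner_transpose w)
  have h2: "(u - p) \<bullet> (transpose A *v (A *v u - b)) = (A *v u - b) \<bullet> (A *v u - b)"
    by (simp only: inner_transpose w)
  have "DF p = - (transpose A *v q)" using kkt by (simp add: eq_neg_iff_add_eq_0)
  then have h3: "(u - p) \<bullet> DF p = - ((A *v u - b) \<bullet> q)"
    by (simp only: inner_minus_right inner_transpose w)
  have e1: "(u - p) \<bullet> Fx u l = - \<alpha> * ((u - p) \<bullet> DF u + (u - p) \<bullet> (transpose A *v l)) - (u - p) \<bullet> (transpose A *v (A *v u - b))"
    unfolding Fx_def by (simp only: inner_diff_right inner_scaleR_right inner_add_right)
  have e2: "(l - q) \<bullet> (A *v u - b) = (A *v u - b) \<bullet> l - (A *v u - b) \<bullet> q"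
    by (simp add: inner_diff_left inner_commute)
  have e3: "(u - p) \<bullet> (DF u - DF p) = (u - p) \<bullet> DF u - (u - p) \<bullet> DF p" by (rule inner_diff_right)
  show ?thesis unfolding Df_def fst_conv snd_conv e1 e2 e3 h1 h2 h3
    by (simp add: algebra_simps)
qed

lemma Df_nonpos:
  assumes feas: "A *v p = b" and kkt: "DF p + transpose A *v q = 0"
  shows "Df p q z \<le> 0"
proof -
  obtain u l where z: "z = (u, l)" by fastforce
  have "(u - p) \<bullet> (DF u - DF p) \<ge> 0" by (rule grad_mono[OF cvx der])
  then have "\<alpha> * ((u - p) \<bullet> (DF u - DF p)) \<ge> 0" using al by simp
  moreover have "(A *v u - b) \<bullet> (A *v u - b) \<ge> 0" by simp
  ultimately show ?thesis unfolding z Df_eq[OF feas kkt] by linarith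
qed

definition z :: "real \<Rightarrow> (real^'d) \<times> (real^'p)" where "z t = (x t, lam t)"

lemma W_deriv:
  assumes t: "t \<ge> 0"
  shows "((\<lambda>t. Wf p q (z t)) has_real_derivative Df p q (z t)) (at t within {0..})"
proof -
  have dx: "(x has_derivative (\<lambda>h. h *\<^sub>R Fx (x t) (lam t))) (at t within {0..})"
    using ode_x[OF t] unfolding Fx_def has_vector_derivative_def .
  have dl: "(lam has_derivative (\<lambda>h. h *\<^sub>R (A *v x t - b))) (at t within {0..})"
    using ode_lam[OF t] unfolding has_vector_derivative_def .
  have "((\<lambda>t. (x t - p) \<bullet> (x t - p) + \<alpha> * ((lam t - q) \<bullet> (lam t - q))) has_derivative
     (\<lambda>h. (x t - p) \<bullet> (h *\<^sub>R Fx (x t) (lam t)) + (h *\<^sub>R Fx (x t) (lam t)) \<bullet> (x t - p)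
        + \<alpha> * ((lam t - q) \<bullet> (h *\<^sub>R (A *v x t - b)) + (h *\<^sub>R (A *v x t - b)) \<bullet> (lam t - q)))) (at t within {0..})"
    by (auto intro!: derivative_eq_intros dx dl)
  moreover have "(\<lambda>h. (x t - p) \<bullet> (h *\<^sub>R Fx (x t) (lam t)) + (h *\<^sub>R Fx (x t) (lam t)) \<bullet> (x t - p)
        + \<alpha> * ((lam t - q) \<bullet> (h *\<^sub>R (A *v x t - b)) + (h *\<^sub>R (A *v x t - b)) \<bullet> (lam t - q)))
     = (*) (Df p q (z t))"
    unfolding Df_def z_def fst_conv snd_conv by (rule ext) (simp add: inner_commute algebra_simps)
  moreover have "(\<lambda>t. Wf p q (z t)) = (\<lambda>t. (x t - p) \<bullet> (x t - p) + \<alpha> * ((lam t - q) \<bullet> (lam t - q)))"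
    unfolding Wf_def z_def by simp
  ultimately show ?thesis unfolding has_field_derivative_def by simp
qed

lemma cont_mv [continuous_intros]:
  fixes M :: "real^'a::finite^'b::finite"
  assumes "continuous_on S f"
  shows "continuous_on S (\<lambda>w. M *v f w)"
  by (rule bounded_linear.continuous_on[OF matrix_vector_mul_bounded_linear assms])

lemma cont_DF [continuous_intros]: "continuous_on S f \<Longrightarrow> continuous_on S (\<lambda>w. DF (f w))"
  by (rule continuous_on_compose2[OF contDF]) auto

lemma cont_Fx: "continuous_on UNIV (\<lambda>w. Fx (fst w) (snd w))"
  unfolding Fx_def by (intro continuous_intros)

lemma cont_AFx: "continuous_on UNIV (\<lambda>w. A *v Fx (fst w) (snd w))"
  by (intro continuous_intros cont_Fx)

lemma cont_Fz: "continuous_on UNIV (\<lambda>w. (Fx (fst w) (snd w), A *v fst w - b))"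
  by (intro continuous_intros cont_Fx)

lemma cont_Df: "continuous_on UNIV (Df p q)"
  unfolding Df_def by (intro continuous_intros cont_Fx)

lemma cont_Wf: "continuous_on UNIV (Wf p q)"
  unfolding Wf_def by (intro continuous_intros)

lemma z_deriv: "t \<ge> 0 \<Longrightarrow> (z has_vector_derivative (Fx (fst (z t)) (snd (z t)), A *v fst (z t) - b)) (at t within {0..})"
  unfolding z_def fst_conv snd_conv
  by (intro has_vector_derivative_Pair) (use ode_x ode_lam in \<open>auto simp: Fx_def\<close>)

lemma Wf_nonneg: "Wf p q w \<ge> 0"
  unfolding Wf_def using al by (intro add_nonneg_nonneg mult_nonneg_nonneg) auto

lemma normW: "(norm (w - (p, q)))\<^sup>2 \<le> (1 + 1 / \<alpha>) * Wf p q w"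
proof -
  obtain u l where w: "w = (u, l)" by fastforce
  define a where "a = (norm (u - p))\<^sup>2"
  define c where "c = (norm (l - q))\<^sup>2"
  have a0: "a \<ge> 0" and c0: "c \<ge> 0" unfolding a_def c_def by auto
  have lhs: "(norm (w - (p, q)))\<^sup>2 = a + c" unfolding w a_def c_def by (simp add: norm_Pair)
  have rhs: "Wf p q w = a + \<alpha> * c" unfolding w a_def c_def Wf_def by (simp add: power2_norm_eq_inner)
  have "(1 + 1 / \<alpha>) * (a + \<alpha> * c) = a + c + a / \<alpha> + \<alpha> * c" using al by (simp add: field_simps)
  moreover have "a / \<alpha> \<ge> 0" "\<alpha> * c \<ge> 0" using a0 c0 al by auto
  ultimately show ?thesis unfolding lhs rhs by linarith
qed

lemma Wdec:
  assumes "A *v p = b" "DF p + transpose A *v q = 0" "0 \<le> s" "s \<le> t"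
  shows "Wf p q (z t) \<le> Wf p q (z s)"
  by (rule nonincr[where W = "\<lambda>t. Wf p q (z t)" and W' = "\<lambda>t. Df p q (z t)"])
     (use W_deriv Df_nonpos[OF assms(1,2)] assms(3,4) in auto)

end

lemma mono_conv:
  fixes W :: "real \<Rightarrow> real"
  assumes dec: "\<And>s t. 0 \<le> s \<Longrightarrow> s \<le> t \<Longrightarrow> W t \<le> W s" and nn: "\<And>t. W t \<ge> 0"
  shows "\<exists>L. (W \<longlongrightarrow> L) at_top"
proof
  define L where "L = Inf (W ` {0..})"
  have bdd: "bdd_below (W ` {0..})" by (rule bdd_belowI[of _ 0]) (use nn in auto)
  show "(W \<longlongrightarrow> L) at_top"
  proof (rule tendstoI)
    fix e :: real assume e: "e > 0"
    have "L < L + e" using e by simp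
    then obtain t0 where t0: "t0 \<in> {0..}" "W t0 < L + e"
      unfolding L_def by (subst (asm) cInf_less_iff) (use bdd in auto)
    show "eventually (\<lambda>t. dist (W t) L < e) at_top"
      unfolding eventually_at_top_linorder
    proof (intro exI allI impI)
      fix t assume t: "t \<ge> t0"
      have "L \<le> W t" unfolding L_def using t t0 bdd by (intro cInf_lower) auto
      moreover have "W t \<le> W t0" using dec[of t0 t] t t0 by auto
      ultimately show "dist (W t) L < e" using t0 by (simp add: dist_real_def)
    qed
  qed
qed


context apgd begin

lemma converges:
  assumes feas0: "A *v p0 = b" and kkt0: "DF p0 + transpose A *v q0 = 0"
  shows "\<exists>xs ls. A *v xs = b \<and> DF xs + transpose A *v ls = 0 \<and> (z \<longlongrightarrow> (xs, ls)) at_top"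
proof -
  define W0 where "W0 = Wf p0 q0 (z 0)"
  define R where "R = sqrt ((1 + 1 / \<alpha>) * W0)"
  define K where "K = cball (p0, q0) R"
  have cK: "compact K" unfolding K_def by simp
  have zK: "z t \<in> K" if t: "t \<ge> 0" for t
  proof -
    have "(norm (z t - (p0, q0)))\<^sup>2 \<le> (1 + 1 / \<alpha>) * Wf p0 q0 (z t)" by (rule normW)
    also have "\<dots> \<le> (1 + 1 / \<alpha>) * W0" unfolding W0_def
      using Wdec[OF feas0 kkt0 order_refl t] al by (intro mult_left_mono) auto
    finally have "norm (z t - (p0, q0)) \<le> R" unfolding R_def by (rule real_le_rsqrt)
    then show ?thesis unfolding K_def by (simp add: dist_norm norm_minus_commute)
  qed
  define Fz where "Fz w = (Fx (fst w) (snd w), A *v fst w - b)" for w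
  have "compact (Fz ` K)" unfolding Fz_def
    by (intro compact_continuous_image continuous_on_subset[OF cont_Fz] cK) auto
  then obtain B where B: "\<And>w. w \<in> K \<Longrightarrow> norm (Fz w) \<le> B"
    using compact_imp_bounded[of "Fz ` K"] unfolding bounded_iff by auto
  have lipz: "dist (z s) (z t) \<le> B * \<bar>s - t\<bar>" if "s \<ge> 0" "t \<ge> 0" for s t
    by (rule lipschitz_traj[where z' = "\<lambda>t. Fz (z t)"]) (use z_deriv B zK that in \<open>auto simp: Fz_def\<close>)
  obtain LW where LW: "((\<lambda>t. Wf p0 q0 (z t)) \<longlongrightarrow> LW) at_top"
    using mono_conv[of "\<lambda>t. Wf p0 q0 (z t)"] Wdec[OF feas0 kkt0] Wf_nonneg by blast
  have DfT: "((\<lambda>t. Df p0 q0 (z t)) \<longlongrightarrow> 0) at_top"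
  proof (rule barbalat[OF _ LW])
    show "((\<lambda>t. Wf p0 q0 (z t)) has_vector_derivative Df p0 q0 (z t)) (at t within {0..})" if "t \<ge> 0" for t
      using W_deriv[OF that] by (simp add: has_real_derivative_iff_has_vector_derivative)
    show "\<forall>e>0. \<exists>d>0. \<forall>s\<ge>0. \<forall>t\<ge>0. \<bar>s - t\<bar> < d \<longrightarrow> dist (Df p0 q0 (z s)) (Df p0 q0 (z t)) < e"
      by (rule uc_comp[OF cK continuous_on_subset[OF cont_Df] zK lipz]) auto
  qed
  have resT: "((\<lambda>t. A *v x t - b) \<longlongrightarrow> 0) at_top"
  proof (rule Lim_null_comparison)
    show "eventually (\<lambda>t. norm (A *v x t - b) \<le> sqrt (- Df p0 q0 (z t) / 2)) at_top"
    proof (intro always_eventually allI)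
      fix t
      have "(x t - p0) \<bullet> (DF (x t) - DF p0) \<ge> 0" by (rule grad_mono[OF cvx der])
      then have "\<alpha> * ((x t - p0) \<bullet> (DF (x t) - DF p0)) \<ge> 0" using al by simp
      then have "(norm (A *v x t - b))\<^sup>2 \<le> - Df p0 q0 (z t) / 2"
        unfolding z_def Df_eq[OF feas0 kkt0] by (simp add: power2_norm_eq_inner)
      then show "norm (A *v x t - b) \<le> sqrt (- Df p0 q0 (z t) / 2)" by (rule real_le_rsqrt)
    qed
    show "((\<lambda>t. sqrt (- Df p0 q0 (z t) / 2)) \<longlongrightarrow> 0) at_top"
      using tendsto_real_sqrt[OF tendsto_divide[OF tendsto_minus[OF DfT] tendsto_const[of 2]]] by simp
  qed
  have AFxT: "((\<lambda>t. A *v Fx (x t) (lam t)) \<longlongrightarrow> 0) at_top"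
  proof (rule barbalat[OF _ resT])
    show "((\<lambda>t. A *v x t - b) has_vector_derivative A *v Fx (x t) (lam t)) (at t within {0..})" if "t \<ge> 0" for t
    proof -
      have "(x has_vector_derivative Fx (x t) (lam t)) (at t within {0..})"
        using ode_x[OF that] by (simp add: Fx_def)
      from bounded_linear.has_vector_derivative[OF matrix_vector_mul_bounded_linear this]
      have "((\<lambda>t. A *v x t) has_vector_derivative A *v Fx (x t) (lam t)) (at t within {0..})" .
      then show ?thesis by (intro derivative_eq_intros) auto
    qed
    have "\<forall>e>0. \<exists>d>0. \<forall>s\<ge>0. \<forall>t\<ge>0. \<bar>s - t\<bar> < d \<longrightarrow>
        dist ((\<lambda>w. A *v Fx (fst w) (snd w)) (z s)) ((\<lambda>w. A *v Fx (fst w) (snd w)) (z t)) < e"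
      by (rule uc_comp[OF cK continuous_on_subset[OF cont_AFx] zK lipz]) auto
    then show "\<forall>e>0. \<exists>d>0. \<forall>s\<ge>0. \<forall>t\<ge>0. \<bar>s - t\<bar> < d \<longrightarrow>
        dist (A *v Fx (x s) (lam s)) (A *v Fx (x t) (lam t)) < e"
      by (simp add: z_def)
  qed
  have sK: "seq_compact K" by (rule compact_imp_seq_compact[OF cK])
  have allK: "\<forall>n. z (real n) \<in> K" using zK by simp
  obtain zb r where zb: "zb \<in> K" and r: "strict_mono (r :: nat \<Rightarrow> nat)"
    and zr: "((\<lambda>n. z (real n)) \<circ> r) \<longlonglongrightarrow> zb"
    using seq_compactE[OF sK allK] by blast
  define tn where "tn n = real (r n)" for n
  have tn: "filterlim tn at_top sequentially"
    unfolding tn_def by (rule filterlim_compose[OF filterlim_real_sequentially filterlim_subseq[OF r]])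
  have zlim: "(\<lambda>n. z (tn n)) \<longlonglongrightarrow> zb" using zr by (simp add: tn_def o_def)
  have lim_at: "(\<lambda>n. H (z (tn n))) \<longlonglongrightarrow> H zb" if "continuous_on UNIV H" for H :: "(real^'d) \<times> (real^'p) \<Rightarrow> 'z::topological_space"
    by (rule isCont_tendsto_compose[OF _ zlim]) (use that in \<open>metis continuous_on_eq_continuous_at open_UNIV UNIV_I\<close>)
  have "Df p0 q0 zb = 0"
    by (rule LIMSEQ_unique[OF lim_at[OF cont_Df] filterlim_compose[OF DfT tn]])
  obtain xb lb where zbp: "zb = (xb, lb)" by fastforce
  have "(\<lambda>n. A *v fst (z (tn n)) - b) \<longlonglongrightarrow> A *v fst zb - b"
    by (rule lim_at) (intro continuous_intros)
  moreover have "(\<lambda>n. A *v fst (z (tn n)) - b) \<longlonglongrightarrow> 0"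
    using filterlim_compose[OF resT tn] by (simp add: z_def)
  ultimately have feasb: "A *v xb = b" using LIMSEQ_unique zbp by fastforce
  have "(\<lambda>n. A *v Fx (fst (z (tn n))) (snd (z (tn n)))) \<longlonglongrightarrow> A *v Fx (fst zb) (snd zb)"
    by (rule lim_at[OF cont_AFx])
  moreover have "(\<lambda>n. A *v Fx (fst (z (tn n))) (snd (z (tn n)))) \<longlonglongrightarrow> 0"
    using filterlim_compose[OF AFxT tn] by (simp add: z_def)
  ultimately have AFxb: "A *v Fx xb lb = 0" using LIMSEQ_unique zbp by fastforce
  have Dfb: "Df p0 q0 (xb, lb) = 0" using \<open>Df p0 q0 zb = 0\<close> zbp by simp
  have "(A *v xb - b) \<bullet> (A *v xb - b) = 0" using feasb by simp
  then have "\<alpha> * ((xb - p0) \<bullet> (DF xb - DF p0)) = 0" using Dfb unfolding Df_eq[OF feas0 kkt0] by simp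
  then have "(xb - p0) \<bullet> (DF xb - DF p0) = 0" using al by simp
  then have gq: "DF xb = DF p0" by (rule grad_eq[OF cvx der])
  have DFp0: "DF p0 = - (transpose A *v q0)" using kkt0 by (simp add: eq_neg_iff_add_eq_0)
  define v where "v = transpose A *v (lb - q0)"
  have Fxb: "Fx xb lb = - \<alpha> *\<^sub>R v"
    unfolding Fx_def v_def gq DFp0 feasb
    by (simp add: matrix_vector_mult_diff_distrib vector_matrix_mult_diff_distrib)
  have "A *v Fx xb lb = - \<alpha> *\<^sub>R (A *v v)" unfolding Fxb by (simp add: matrix_vector_mult_scaleR mv_minus)
  then have Av: "A *v v = 0" using AFxb al by simp
  have "v \<bullet> v = (A *v v) \<bullet> (lb - q0)" unfolding v_def[symmetric] by (rule inner_transpose[of v A "lb - q0", unfolded v_def[symmetric]])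
  then have "v = 0" using Av by simp
  then have kktb: "DF xb + transpose A *v lb = 0"
    unfolding v_def gq DFp0 by (simp add: matrix_vector_mult_diff_distrib vector_matrix_mult_diff_distrib)
  have Wb_lim: "(\<lambda>n. Wf xb lb (z (tn n))) \<longlonglongrightarrow> 0"
    using lim_at[OF cont_Wf, of xb lb] zbp by (simp add: Wf_def)
  have WbT: "((\<lambda>t. Wf xb lb (z t)) \<longlongrightarrow> 0) at_top"
  proof (rule tendstoI)
    fix e :: real assume e: "e > 0"
    obtain N where N: "\<And>n. n \<ge> N \<Longrightarrow> dist (Wf xb lb (z (tn n))) 0 < e"
      using tendstoD[OF Wb_lim e] unfolding eventually_sequentially by blast
    show "eventually (\<lambda>t. dist (Wf xb lb (z t)) 0 < e) at_top"
      unfolding eventually_at_top_linorder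
    proof (intro exI allI impI)
      fix t assume t: "t \<ge> tn N"
      have tN: "tn N \<ge> 0" unfolding tn_def by simp
      have "Wf xb lb (z t) \<le> Wf xb lb (z (tn N))" by (rule Wdec[OF feasb kktb tN t])
      moreover have "dist (Wf xb lb (z (tn N))) 0 < e" by (rule N) simp
      ultimately show "dist (Wf xb lb (z t)) 0 < e" using Wf_nonneg[of xb lb "z t"] Wf_nonneg[of xb lb "z (tn N)"]
        by (simp add: dist_real_def)
    qed
  qed
  have "((\<lambda>t. z t - zb) \<longlongrightarrow> 0) at_top"
  proof (rule Lim_null_comparison)
    show "eventually (\<lambda>t. norm (z t - zb) \<le> sqrt ((1 + 1 / \<alpha>) * Wf xb lb (z t))) at_top"
      unfolding zbp by (intro always_eventually allI real_le_rsqrt normW)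
    show "((\<lambda>t. sqrt ((1 + 1 / \<alpha>) * Wf xb lb (z t))) \<longlongrightarrow> 0) at_top"
      using tendsto_real_sqrt[OF tendsto_mult[OF tendsto_const WbT]] by simp
  qed
  then have "(z \<longlongrightarrow> zb) at_top" by (simp add: LIM_zero_iff)
  then show ?thesis using feasb kktb zbp by blast
qed

end


theorem proposition1:
  fixes blk :: "'d::finite \<Rightarrow> 'n::finite"
    and f :: "'n \<Rightarrow> real^'d \<Rightarrow> real"
    and g :: "'n \<Rightarrow> real^'d \<Rightarrow> real^'d"
    and A :: "real^'d^'p::finite"
    and b :: "real^'p"
    and \<alpha> :: real
    and x :: "real \<Rightarrow> real^'d"
    and lam :: "real \<Rightarrow> real^'p"
  assumes block: "\<And>i u v. (\<forall>j. blk j = i \<longrightarrow> u $ j = v $ j) \<Longrightarrow> f i u = f i v"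
    and convex: "\<And>i. convex_on UNIV (f i)"
    and grad: "\<And>i u. GDERIV (f i) u :> g i u"
    and lip: "\<And>i. locally_lipschitz (g i)"
    and feasible: "\<exists>u. A *v u = b"
    and optimal: "\<exists>u. A *v u = b \<and> (\<forall>v. A *v v = b \<longrightarrow> (\<Sum>i\<in>UNIV. f i u) \<le> (\<Sum>i\<in>UNIV. f i v))"
    and alpha: "\<alpha> > 0"
    and ode_x: "\<And>t. t \<ge> 0 \<Longrightarrow> (x has_vector_derivative
        (- \<alpha> *\<^sub>R ((\<Sum>i\<in>UNIV. g i (x t)) + transpose A *v lam t)
         - transpose A *v (A *v x t - b))) (at t within {0..})"
    and ode_lam: "\<And>t. t \<ge> 0 \<Longrightarrow> (lam has_vector_derivative (A *v x t - b)) (at t within {0..})"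
  shows "\<exists>xs ls. is_saddle_point \<alpha> (\<lambda>u. \<Sum>i\<in>UNIV. f i u) A b xs ls \<and>
           ((\<lambda>t. (x t, lam t)) \<longlongrightarrow> (xs, ls)) at_top"
proof -
  define F where "F u = (\<Sum>i\<in>UNIV. f i u)" for u
  define DF where "DF u = (\<Sum>i\<in>UNIV. g i u)" for u
  have cvx: "convex_on UNIV F"
  proof (rule convex_onI)
    fix t :: real and u v :: "real^'d" assume t: "0 < t" "t < 1"
    have "F ((1 - t) *\<^sub>R u + t *\<^sub>R v) = (\<Sum>i\<in>UNIV. f i ((1 - t) *\<^sub>R u + t *\<^sub>R v))" by (simp add: F_def)
    also have "\<dots> \<le> (\<Sum>i\<in>UNIV. (1 - t) * f i u + t * f i v)"
      by (intro sum_mono convex_onD[OF convex]) (use t in auto)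
    also have "\<dots> = (1 - t) * F u + t * F v" by (simp add: F_def sum.distrib sum_distrib_left)
    finally show "F ((1 - t) *\<^sub>R u + t *\<^sub>R v) \<le> (1 - t) * F u + t * F v" .
  qed simp
  have der: "(F has_derivative (\<lambda>h. h \<bullet> DF u)) (at u)" for u
  proof -
    have "((\<lambda>u. \<Sum>i\<in>UNIV. f i u) has_derivative (\<lambda>h. \<Sum>i\<in>UNIV. h \<bullet> g i u)) (at u)"
      by (intro has_derivative_sum) (use grad in \<open>auto simp: gderiv_def\<close>)
    then show ?thesis unfolding F_def DF_def by (simp add: inner_sum_right)
  qed
  have contg: "isCont (g i) u" for i u
  proof -
    obtain U L where U: "open U" "u \<in> U" "L-lipschitz_on U (g i)"
      using lip[of i] unfolding locally_lipschitz_def by blast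
    then have "continuous_on U (g i)" by (intro lipschitz_on_continuous_on)
    then show ?thesis using U by (simp add: continuous_on_eq_continuous_at)
  qed
  have contDF: "continuous_on UNIV DF"
    unfolding DF_def by (intro continuous_at_imp_continuous_on ballI continuous_intros contg)
  interpret apgd F DF A b \<alpha> x lam
  proof
    show "\<alpha> > 0" by (rule alpha)
    show "(x has_vector_derivative
        (- \<alpha> *\<^sub>R (DF (x t) + transpose A *v lam t) - transpose A *v (A *v x t - b))) (at t within {0..})"
      if "t \<ge> 0" for t using ode_x[OF that] by (simp add: DF_def)
  qed (use cvx der contDF ode_lam in auto)
  obtain p0 where p0: "A *v p0 = b" "\<forall>v. A *v v = b \<longrightarrow> F p0 \<le> F v"
    using optimal unfolding F_def by blast
  obtain q0 where q0: "DF p0 + transpose A *v q0 = 0"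
    using kkt_exists[OF der p0] by blast
  obtain xs ls where fe: "A *v xs = b" and kk: "DF xs + transpose A *v ls = 0"
    and lim: "(z \<longlongrightarrow> (xs, ls)) at_top"
    using converges[OF p0(1) q0] by blast
  have sp: "is_saddle_point \<alpha> F A b xs ls" by (rule kkt_saddle[OF cvx der alpha fe kk])
  have ze: "z = (\<lambda>t. (x t, lam t))" by (simp add: fun_eq_iff z_def)
  have Fe: "F = (\<lambda>u. \<Sum>i\<in>UNIV. f i u)" by (simp add: fun_eq_iff F_def)
  have "is_saddle_point \<alpha> (\<lambda>u. \<Sum>i\<in>UNIV. f i u) A b xs ls" using sp unfolding Fe .
  moreover have "((\<lambda>t. (x t, lam t)) \<longlongrightarrow> (xs, ls)) at_top" using lim unfolding ze .
  ultimately show ?thesis by blast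
qed

end
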